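(* Let $q$ be an odd prime power, $c\in\mathbb{F}_q^*$, and $f(X)=X(X^{q-1}-c)^{q+1}$ viewed as a map $\mathbb{F}_{q^2}\to\mathbb{F}_{q^2}$. Let $\mathrm{Fix}(f)=\{\alpha\in\mathbb{F}_{q^2}: f(\alpha)=\alpha\}$. Then \[ |\mathrm{Fix}(f)|=\begin{cases} q & \text{if } c^2=4,\\ 2q-1 & \text{if } c^2\neq 4 \text{ and } \chi_2\!\left(\frac{c+2}{c-2}\right)=-1,\\ 1 & \text{if } c^2\neq 4 \text{ and } \chi_2\!\left(\frac{c+2}{c-2}\right)=1.\end{cases} \]
   Context: $\chi_2$ is the quadratic character of $\mathbb{F}_q$: $\chi_2(\alpha)=1$ if $\alpha$ is a nonzero square in $\mathbb{F}_q$, $-1$ if $\alpha$ is a non-square, and $0$ if $\alpha=0$. *)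

theory Defs
  imports "HOL-Computational_Algebra.Primes" "HOL-Library.Cardinality"
begin

text \<open>The subfield F_q of a finite field F of order q^2 is the set of roots of X^q - X.\<close>
definition Fq :: "nat \<Rightarrow> 'a::field set" where
  "Fq q = {x. x ^ q = x}"

definition chi2 :: "nat \<Rightarrow> 'a::field \<Rightarrow> int" where
  "chi2 q a = (if a = 0 then 0 else if (\<exists>y\<in>Fq q. y ^ 2 = a) then 1 else -1)"

end

theory Submission imports Defs "HOL-Computational_Algebra.Polynomial" begin

lemma ofnat_card_zero: "of_nat CARD('a) = (0::'a::{field,finite})"
proof -
  have "(\<Sum>x\<in>(UNIV::'a set). x + 1) = (\<Sum>x\<in>UNIV. x)"
    by (rule sum.reindex_bij_witness[of _ "\<lambda>x. x - 1" "\<lambda>x. x + 1"]) auto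
  thus ?thesis by (simp add: sum.distrib)
qed

lemma pow_card_same:
  fixes x :: "'a :: {field,finite}"
  shows   "x ^ card (UNIV :: 'a set) = x"
proof (cases "x = 0")
  case False
  have "x * (\<Prod>y\<in>UNIV-{0}. x * y) = x * x ^ (card (UNIV :: 'a set) - 1) * \<Prod>(UNIV-{0})"
    by (simp add: prod.distrib mult_ac)
  also have "x * x ^ (card (UNIV :: 'a set) - 1) = x ^ Suc (card (UNIV :: 'a set) - 1)"
    by (subst power_Suc) auto
  also have "Suc (card (UNIV :: 'a set) - 1) = card (UNIV :: 'a set)"
    using finite_UNIV_card_ge_0[where ?'a = 'a] by simp
  also have "(\<Prod>y\<in>UNIV-{0}. x * y) = (\<Prod>y\<in>UNIV-{0}. y)"
    by (rule prod.reindex_bij_witness[of _ "\<lambda>y. y / x" "\<lambda>y. x * y"]) (use False in auto)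
  finally show ?thesis
    by simp
qed (use finite_UNIV_card_ge_0[where ?'a = 'a] in auto)

lemma pow_card1:
  fixes x :: "'a :: {field,finite}"
  assumes "x \<noteq> 0" shows "x ^ (CARD('a) - 1) = 1"
proof -
  have "x * x ^ (CARD('a) - 1) = x * 1"
  proof -
    have "Suc (CARD('a) - 1) = CARD('a)" using finite_UNIV_card_ge_0[where ?'a = 'a] by simp
    hence "x * x ^ (CARD('a) - 1) = x ^ CARD('a)" using power_Suc[of x "CARD('a) - 1"] by simp
    thus ?thesis using pow_card_same[of x] by simp
  qed
  thus ?thesis using assms by simp
qed

lemma root_bound:
  fixes a :: "'a::field"
  assumes "n > 0" shows "card {x. x ^ n = a} \<le> n"
proof -
  define p where "p = monom (1::'a) n + [:-a:]"
  have deg: "degree p = n" unfolding p_def using assms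
    by (subst degree_add_eq_left) (auto simp: degree_monom_eq)
  hence "p \<noteq> 0" using assms by auto
  have "{x. x ^ n = a} = {x. poly p x = 0}" by (auto simp: p_def poly_monom)
  thus ?thesis using card_poly_roots_bound[OF \<open>p \<noteq> 0\<close>] deg by simp
qed

lemma pow_swap: "((x::'a::monoid_mult)^a)^b = (x^b)^a"
  by (simp add: power_mult[symmetric] mult.commute)

lemma fiber_card:
  fixes u :: "'a :: {field,finite}"
  assumes k: "k > 0" and m: "m > 0" and km: "k * m = CARD('a) - 1" and u: "u ^ m = 1"
  shows "card {x. x ^ k = u} = k"
proof -
  define M where "M = {v::'a. v ^ m = 1}"
  define fib where "fib v = {x::'a. x ^ k = v}" for v
  have un: "UNIV - {0} = (\<Union>v\<in>M. fib v)"
  proof (intro equalityI subsetI)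
    fix x :: 'a assume "x \<in> UNIV - {0}"
    hence "x \<noteq> 0" by simp
    hence "(x^k)^m = 1" using pow_card1[of x] km by (simp add: power_mult[symmetric])
    thus "x \<in> (\<Union>v\<in>M. fib v)" by (auto simp: M_def fib_def)
  next
    fix x assume "x \<in> (\<Union>v\<in>M. fib v)"
    thus "x \<in> UNIV - {0}" using k m by (auto simp: M_def fib_def zero_power)
  qed
  have "card (UNIV - {0::'a}) = CARD('a) - 1" by (simp add: card_Diff_singleton)
  also have "card (UNIV - {0::'a}) = (\<Sum>v\<in>M. card (fib v))"
    unfolding un by (rule card_UN_disjoint) (auto simp: fib_def)
  finally have eq: "(\<Sum>v\<in>M. card (fib v)) = k * m" using km by simp
  have uM: "u \<in> M" using u by (simp add: M_def)
  have cM: "card M \<le> m" unfolding M_def using root_bound[OF m] .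
  have fb: "card (fib v) \<le> k" for v unfolding fib_def using root_bound[OF k] .
  have "(\<Sum>v\<in>M. card (fib v)) = card (fib u) + (\<Sum>v\<in>M-{u}. card (fib v))"
    using uM by (simp add: sum.remove)
  also have "(\<Sum>v\<in>M-{u}. card (fib v)) \<le> (\<Sum>v\<in>M-{u}. k)" by (rule sum_mono) (rule fb)
  also have "\<dots> = (card M - 1) * k" using uM by simp
  also have "\<dots> \<le> (m - 1) * k" by (intro mult_le_mono1) (use cM in arith)
  finally have "k * m \<le> card (fib u) + (m - 1) * k" using eq by simp
  moreover have "k * m = k + (m - 1) * k" using m by (cases m) auto
  ultimately have "k \<le> card (fib u)" by simp
  thus ?thesis using fb[of u] by (simp add: fib_def)
qed


theorem mainTheorem2:
  fixes q :: nat and c :: "'a::{field,finite}" and f :: "'a \<Rightarrow> 'a"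
  assumes "\<exists>p k. prime p \<and> k > 0 \<and> q = p ^ k"
    and "odd q"
    and "CARD('a) = q ^ 2"
    and "c \<in> Fq q" and "c \<noteq> 0"
    and "\<And>x. f x = x * (x ^ (q - 1) - c) ^ (q + 1)"
  shows "card {\<alpha>. f \<alpha> = \<alpha>} =
    (if c ^ 2 = 4 then q
     else if chi2 q ((c + 2) / (c - 2)) = -1 then 2 * q - 1
     else 1)"
proof -
  obtain p k where pk: "prime p" "k > 0" "q = p ^ k" using assms(1) by blast
  have fin: "finite (UNIV::'a set)" by simp
  have charpos: "CHAR('a) > 0" using finite_imp_CHAR_pos[OF fin] .
  have chp: "prime CHAR('a)" using prime_CHAR_semidom charpos by blast
  have "of_nat (q^2) = (0::'a)" by (simp only: assms(3)[symmetric] ofnat_card_zero)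
  hence "CHAR('a) dvd q^2" by (simp only: of_nat_eq_0_iff_char_dvd)
  moreover have "q^2 = p^(k*2)" using pk by (simp add: power_mult)
  ultimately have "CHAR('a) dvd p" using prime_dvd_power[OF chp] by simp
  hence ch: "CHAR('a) = p" using chp pk(1) primes_dvd_imp_eq by blast
  have frob: "(x+y)^q = x^q + y^q" for x y :: 'a
    using freshmans_dream'[OF chp, of q k] pk ch by simp
  have oddp: "odd p" using assms(2) pk by auto
  have two: "(2::'a) \<noteq> 0"
  proof
    assume "(2::'a) = 0"
    hence "of_nat 2 = (0::'a)" by simp
    hence "p dvd 2" using ch of_nat_eq_0_iff_char_dvd[where ?'a='a, of 2] by simp
    hence "p = 2" using dvd_imp_le[of p 2] prime_gt_1_nat[OF pk(1)] by linarith
    thus False using oddp by simp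
  qed
  have four4: "(4::'a) \<noteq> 0" using no_zero_divisors[OF two two] by simp
  have q1: "1 < q" using one_less_power[OF prime_gt_1_nat[OF pk(1)] pk(2)] pk(3) by simp
  have q3: "q \<ge> 3" using q1 assms(2) by presburger
  have fsub: "(x - y)^q = x^q - y^q" for x y :: 'a
  proof -
    have "x^q = (x-y)^q + y^q" using frob[of "x-y" y] by simp
    thus ?thesis by (simp add: eq_diff_eq)
  qed
  have fneg: "(-x)^q = - (x^q)" for x :: 'a using assms(2) by simp
  have f2: "(2::'a)^q = 2" using frob[of 1 1] by simp
  have cq: "c^q = c" using assms(4) by (simp add: Fq_def)
  have xq2: "x^(q^2) = x" for x :: 'a using pow_card_same[of x] assms(3) by simp
  have xq21: "x \<noteq> 0 \<Longrightarrow> x^(q^2 - 1) = 1" for x :: 'a using pow_card1[of x] assms(3) by simp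
  have qq: "(q-1)*(q+1) = q^2 - 1" using q1 by (cases q) (auto simp: power2_eq_square)
  have c2: "(c - 2)^q = c - 2" using fsub cq f2 by simp
  have Fqmul: "x^q = x \<Longrightarrow> y^q = y \<Longrightarrow> (x*y)^q = x*y" for x y :: 'a
    by (simp add: power_mult_distrib)
  have Fqdiv: "x^q = x \<Longrightarrow> y^q = y \<Longrightarrow> (x/y)^q = x/y" for x y :: 'a
    by (simp add: power_divide)
  define R where "R = {u::'a. u^(q+1) = 1 \<and> u^2 - c*u + 1 = 0}"
  define fib where "fib u = {x::'a. x^(q-1) = u}" for u
  have rootchar: "u^2 - c*u + 1 = 0 \<longleftrightarrow> (2*u - c)^2 = c^2 - 4" for u
  proof -
    have h: "(2*u - c)^2 - (c^2 - 4) = 4*(u^2 - c*u + 1)"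
      by (simp add: algebra_simps power2_eq_square)
    have four: "(4::'a) \<noteq> 0" using no_zero_divisors[OF two two] by simp
    have "(2*u-c)^2 = c^2-4 \<longleftrightarrow> (2*u-c)^2 - (c^2-4) = 0" by (rule eq_iff_diff_eq_0)
    also have "\<dots> \<longleftrightarrow> 4*(u^2-c*u+1) = 0" by (simp only: h)
    also have "\<dots> \<longleftrightarrow> u^2-c*u+1=0" by (simp only: mult_eq_0_iff four simp_thms)
    finally show ?thesis by simp
  qed
  have key: "f x = x \<longleftrightarrow> x^(q-1) \<in> R" if x0: "x \<noteq> 0" for x
  proof -
    define u where "u = x^(q-1)"
    have "u^(q+1) = x^((q-1)*(q+1))" by (simp only: u_def power_mult)
    also have "\<dots> = x^(q^2-1)" by (simp only: qq)
    also have "\<dots> = 1" by (rule xq21[OF x0])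
    finally have uu: "u^(q+1) = 1" .
    have u0: "u \<noteq> 0"
    proof
      assume "u = 0" thus False using uu by simp
    qed
    have uq: "u^q = 1/u" using uu u0 by (simp add: field_simps)
    have "f x = x \<longleftrightarrow> (u - c)^(q+1) = 1" using x0 assms(6)[of x] by (simp add: u_def)
    also have "(u - c)^(q+1) = (1/u - c)*(u - c)" using fsub[of u c] cq uq by simp
    also have "(1/u - c)*(u - c) = 1 \<longleftrightarrow> (1 - c*u)*(u - c) = u" using u0 by (simp add: field_simps)
    also have "\<dots> \<longleftrightarrow> (1 - c*u)*(u - c) - u = 0" by simp
    also have "(1 - c*u)*(u - c) - u = -(c*(u^2 - c*u + 1))"
      by (simp add: algebra_simps power2_eq_square)
    also have "-(c*(u^2 - c*u + 1)) = 0 \<longleftrightarrow> u^2 - c*u + 1 = 0" using assms(5) by simp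
    finally show ?thesis using uu by (simp add: R_def u_def)
  qed
  have Rne0: "u \<in> R \<Longrightarrow> u \<noteq> 0" for u by (auto simp: R_def)
  have S: "{\<alpha>. f \<alpha> = \<alpha>} = insert 0 (\<Union>u\<in>R. fib u)"
  proof (intro equalityI subsetI)
    fix x assume "x \<in> {\<alpha>. f \<alpha> = \<alpha>}"
    thus "x \<in> insert 0 (\<Union>u\<in>R. fib u)" using key[of x] by (auto simp: fib_def)
  next
    fix x assume "x \<in> insert 0 (\<Union>u\<in>R. fib u)"
    then consider "x = 0" | u where "u \<in> R" "x^(q-1) = u" by (auto simp: fib_def)
    thus "x \<in> {\<alpha>. f \<alpha> = \<alpha>}"
    proof cases
      case 1 thus ?thesis using assms(6) by simp
    next
      case 2
      have "x \<noteq> 0"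
      proof
        assume "x = 0"
        hence "u = 0" using 2 q1 by (simp add: zero_power)
        thus False using Rne0 2 by blast
      qed
      thus ?thesis using key 2 by simp
    qed
  qed
  have fibc: "u \<in> R \<Longrightarrow> card (fib u) = q - 1" for u
    unfolding fib_def
    by (rule fiber_card[of "q-1" "q+1"]) (use q1 assms(3) qq in \<open>auto simp: R_def\<close>)
  have cardS: "card {\<alpha>. f \<alpha> = \<alpha>} = Suc (card R * (q - 1))"
  proof -
    have "0 \<notin> (\<Union>u\<in>R. fib u)" using Rne0 q1 by (auto simp: fib_def zero_power)
    hence "card {\<alpha>. f \<alpha> = \<alpha>} = Suc (card (\<Union>u\<in>R. fib u))" unfolding S by simp
    also have "card (\<Union>u\<in>R. fib u) = (\<Sum>u\<in>R. card (fib u))"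
      by (rule card_UN_disjoint) (auto simp: fib_def)
    also have "\<dots> = card R * (q - 1)" using fibc by simp
    finally show ?thesis .
  qed
  have cq2: "(c^2)^q = c^2" using pow_swap[of c 2 q] cq by simp
  have fourq: "(4::'a)^q = 4"
  proof -
    have "(4::'a) = 2^2" by simp
    thus ?thesis using pow_swap[of "2::'a" 2 q] f2 by simp
  qed
  have R2: "u \<in> R \<longleftrightarrow> u^(q+1) = 1 \<and> (2*u - c)^2 = c^2 - 4" for u
    using rootchar[of u] by (simp add: R_def)
  have upq: "u^(q+1) = u^q * u" for u :: 'a by (simp add: power_Suc2[symmetric])
  have q2: "q+1 = 2*((q+1) div 2)" using assms(2) by simp
  show ?thesis
  proof (cases "c^2 = 4")
    case True
    have Req: "R = {c/2}"
    proof (intro equalityI subsetI)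
      fix u assume "u \<in> R"
      hence "(2*u - c)^2 = 0" using R2[of u] True by simp
      hence "2*u - c = 0" by simp
      thus "u \<in> {c/2}" using two by (simp add: field_simps)
    next
      fix u assume "u \<in> {c/2}"
      hence u: "u = c/2" by simp
      have "2*u - c = 0" using u two by (simp add: mult.commute)
      hence a: "(2*u - c)^2 = c^2 - 4" using True by simp
      have "u^2 = c^2/2^2" by (simp only: u power_divide)
      also have "\<dots> = 1" using True four4 by simp
      finally have u2: "u^2 = 1" .
      have "u^(q+1) = (u^2)^((q+1) div 2)" by (subst q2) (simp only: power_mult)
      hence "u^(q+1) = 1" using u2 by simp
      thus "u \<in> R" using R2 a by simp
    qed
    thus ?thesis using cardS True q1 by simp
  next
    case False
    define d where "d = c^2 - 4"
    have d0: "d \<noteq> 0" using False by (simp add: d_def)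
    have dq: "d^q = d" using fsub[of "c^2" 4] cq2 fourq by (simp add: d_def)
    have cm2: "c - 2 \<noteq> 0" using False by auto
    have cp2: "c + 2 \<noteq> 0"
    proof
      assume "c + 2 = 0" hence "c = -2" by (simp add: add_eq_0_iff2)
      thus False using False by simp
    qed
    have r0: "(c+2)/(c-2) \<noteq> 0" using cm2 cp2 by simp
    have dr: "d = (c+2)/(c-2) * (c-2)^2" using cm2
      by (simp add: d_def power2_eq_square field_simps)
    show ?thesis
    proof (cases "\<exists>y\<in>Fq q. y^2 = (c+2)/(c-2)")
      case True
      then obtain z where z: "z^q = z" "z^2 = (c+2)/(c-2)" by (auto simp: Fq_def)
      define w where "w = z*(c-2)"
      have wq: "w^q = w" using Fqmul[OF z(1) c2] by (simp add: w_def)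
      have w2: "w^2 = d" using z(2) dr by (simp add: w_def power_mult_distrib)
      have "R = {}"
      proof (rule ccontr)
        assume "R \<noteq> {}" then obtain u where u: "u \<in> R" by blast
        have "(2*u - c)^2 = w^2" using u R2[of u] w2 by (simp add: d_def)
        hence t: "2*u - c = w \<or> 2*u - c = -w" by (simp add: power2_eq_iff)
        have tq: "(2*u - c)^q = 2*u - c" using t wq fneg by auto
        have "(2*u)^q = 2*u" using frob[of "2*u-c" c] tq cq by simp
        hence "2 * u^q = 2*u" using f2 by (simp add: power_mult_distrib)
        hence uq: "u^q = u" using two by simp
        have "u^(q+1) = 1" using u by (simp add: R_def)
        hence uu: "u*u = 1" using uq upq[of u] by simp
        have "u^2 - c*u + 1 = 0" using u by (simp add: R_def)
        hence "1 - c*u + 1 = 0" using uu by (simp add: power2_eq_square)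
        hence "c*u = 2" by (simp add: algebra_simps)
        hence "(c*u)*(c*u) = 4" by simp
        hence "c^2 * (u*u) = 4" by (simp add: power2_eq_square algebra_simps)
        thus False using uu False by simp
      qed
      moreover have "chi2 q ((c+2)/(c-2)) = 1" using True r0 by (simp add: chi2_def)
      ultimately show ?thesis using cardS False by simp
    next
      case nosq: False
      have chi: "chi2 q ((c+2)/(c-2)) = -1" using nosq r0 by (simp add: chi2_def)
      define m where "m = (q-1)*((q+1) div 2)"
      have "2*m = (q-1)*(2*((q+1) div 2))" unfolding m_def by simp
      also have "\<dots> = q^2 - 1" using qq q2 by simp
      finally have m2: "2*m = CARD('a) - 1" using assms(3) by simp
      have mpos: "m > 0" using q3 unfolding m_def by simp
      have "d^q = d^(q-1) * d" using power_Suc2[of d "q-1"] q1 by simp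
      hence dq1: "d^(q-1) = 1" using dq d0 by simp
      have dm: "d^m = 1" by (simp only: m_def power_mult dq1 power_one)
      have "card {y. y^2 = d} = 2" by (rule fiber_card[of 2 m]) (use m2 mpos dm in auto)
      hence "{y. y^2 = d} \<noteq> {}" by (intro notI) simp
      then obtain y where y: "y^2 = d" by auto
      have y0: "y \<noteq> 0" using y d0 by auto
      have "(y^q)^2 = (y^2)^q" by (rule pow_swap)
      hence "(y^q)^2 = y^2" using y dq by simp
      hence yy: "y^q = y \<or> y^q = -y" by (simp add: power2_eq_iff)
      have "y^q \<noteq> y"
      proof
        assume yq: "y^q = y"
        define z where "z = y/(c-2)"
        have "z^q = z" using Fqdiv[OF yq c2] by (simp add: z_def)
        moreover have "z^2 = (c+2)/(c-2)" using y dr cm2 by (simp add: z_def power_divide)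
        ultimately show False using nosq by (auto simp: Fq_def)
      qed
      hence yq: "y^q = -y" using yy by blast
      have inR: "(c+s)/2 \<in> R" if sq: "s^q = -s" and s2: "s^2 = d" for s
      proof -
        define u where "u = (c+s)/2"
        have u2: "2*u = c + s" using two by (simp add: u_def)
        have a: "(2*u - c)^2 = c^2 - 4" using u2 s2 by (simp add: d_def)
        have "(2*u)^q = c - s" using u2 frob[of c s] cq sq by simp
        hence b: "2*u^q = c - s" using f2 by (simp add: power_mult_distrib)
        have "(2*u^q)*(2*u) = (c-s)*(c+s)" using b u2 by simp
        also have "\<dots> = 4" using s2 by (simp add: d_def algebra_simps power2_eq_square)
        finally have "4*(u^q*u) = 4" by (simp add: algebra_simps)
        hence "u^q * u = 1" using four4 by simp
        hence "u^(q+1) = 1" using upq[of u] by (simp only:)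
        thus ?thesis using R2 a by (simp add: u_def)
      qed
      have "R = {(c+y)/2, (c+(-y))/2}"
      proof (intro equalityI subsetI)
        fix u assume "u \<in> R"
        hence "(2*u - c)^2 = y^2" using R2[of u] y by (simp add: d_def)
        hence "2*u - c = y \<or> 2*u - c = -y" by (simp add: power2_eq_iff)
        thus "u \<in> {(c+y)/2, (c+(-y))/2}" using two by (auto simp: field_simps)
      next
        fix u assume "u \<in> {(c+y)/2, (c+(-y))/2}"
        have a: "(c+y)/2 \<in> R" using inR[of y] yq y by simp
        have b: "(c+(-y))/2 \<in> R" using inR[of "-y"] yq y fneg[of y] by simp
        from \<open>u \<in> {(c+y)/2, (c+(-y))/2}\<close> have "u = (c+y)/2 \<or> u = (c+(-y))/2" by blast
        thus "u \<in> R" using a b by blast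
      qed
      moreover have "(c+y)/2 \<noteq> (c+(-y))/2"
      proof
        assume "(c+y)/2 = (c+(-y))/2"
        hence "y = -y" using two four4 by (simp add: field_simps)
        hence "2*y = 0" by simp
        thus False using two y0 by simp
      qed
      ultimately have "card R = 2" by simp
      thus ?thesis using cardS False chi q1 by simp
    qed
  qed
qed

end
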